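(* Let $K$ be an abelian topological group which is compact or torsion, and $X$ a topological vector space over $\mathbf{C}$. Then $P(K,X)=P^0(K,X)$, i.e. every polynomial $p:K\to X$ is constant.
   Context: $\mathbf{Z}_+=\{0,1,2,\dots\}$. A group is torsion if every element has finite order. A continuous $p:K\to X$ is a polynomial of degree at most $n$ if for all $s,t\in K$ the map $m\mapsto p(s+mt)$, $m\in\mathbf{Z}_+$, is a polynomial in $m$ of degree at most $n$ with coefficients in $X$; $P^n(K,X)$ is the space of these and $P(K,X)=\bigcup_{n}P^n(K,X)$. *)

theory Defs
  imports "HOL-Analysis.Analysis"
begin

primrec nmul :: "nat \<Rightarrow> 'a::monoid_add \<Rightarrow> 'a" where
  "nmul 0 t = 0"
| "nmul (Suc m) t = t + nmul m t"

definition complex_tvs :: "(complex \<Rightarrow> 'x::{topological_ab_group_add,t2_space} \<Rightarrow> 'x) \<Rightarrow> bool" where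
  "complex_tvs smul \<longleftrightarrow> vector_space smul \<and>
     continuous_on UNIV (\<lambda>z::complex \<times> 'x. smul (fst z) (snd z))"

definition polys_deg :: "(complex \<Rightarrow> 'x::{topological_ab_group_add,t2_space} \<Rightarrow> 'x) \<Rightarrow> nat
    \<Rightarrow> ('k::topological_ab_group_add \<Rightarrow> 'x) set" where
  "polys_deg smul n = {p. continuous_on UNIV p \<and>
     (\<forall>s t. \<exists>a::nat \<Rightarrow> 'x. \<forall>m::nat.
        p (s + nmul m t) = (\<Sum>k\<le>n. smul (of_nat m ^ k) (a k)))}"

definition polys :: "(complex \<Rightarrow> 'x::{topological_ab_group_add,t2_space} \<Rightarrow> 'x)
    \<Rightarrow> ('k::topological_ab_group_add \<Rightarrow> 'x) set" where
  "polys smul = (\<Union>n. polys_deg smul n)"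

definition torsion_group :: "'k::monoid_add itself \<Rightarrow> bool" where
  "torsion_group _ \<longleftrightarrow> (\<forall>x::'k. \<exists>m>0. nmul m x = 0)"

end

theory Submission
  imports Defs
begin

lemma cont_smul:
  assumes "complex_tvs smul" and that: "(g \<longlongrightarrow> l) F" "(h \<longlongrightarrow> x) F"
  shows "((\<lambda>y. smul (g y) (h y)) \<longlongrightarrow> smul l x) F"
proof -
  have c: "continuous_on UNIV (\<lambda>z::complex \<times> _. smul (fst z) (snd z))"
    using assms unfolding complex_tvs_def by auto
  have "isCont (\<lambda>z::complex \<times> _. smul (fst z) (snd z)) (l, x)"
    using c by (simp add: continuous_on_eq_continuous_at)
  from isCont_tendsto_compose[OF this tendsto_Pair[OF that]] show ?thesis by simp
qed

lemma compact_scale_0: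
  fixes smul :: "complex \<Rightarrow> 'b::{topological_ab_group_add,t2_space} \<Rightarrow> 'b"
  assumes "complex_tvs smul" "compact C" "\<And>m. c m \<in> C" "(e \<longlongrightarrow> 0) F"
  shows "((\<lambda>m. smul (e m) (c m)) \<longlongrightarrow> 0) F"
proof (rule topological_tendstoI)
  fix W assume W: "open W" "(0::'b) \<in> W"
  interpret vector_space smul using assms(1) unfolding complex_tvs_def by auto
  have c: "continuous_on UNIV (\<lambda>z::complex \<times> 'b. smul (fst z) (snd z))"
    using assms unfolding complex_tvs_def by auto
  let ?W = "(\<lambda>z::complex \<times> 'b. smul (fst z) (snd z)) -` W"
  have o: "open ?W" using open_vimage[OF W(1) c] .
  have "{0} \<times> C \<subseteq> ?W" using W by auto
  from Elementary_Topology.tube_lemma[OF assms(2) o this] obtain A where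
    A: "0 \<in> A" "open A" "A \<times> C \<subseteq> ?W" by blast
  have "eventually (\<lambda>m. e m \<in> A) F" using topological_tendstoD[OF assms(4) A(2,1)] .
  then show "eventually (\<lambda>m. smul (e m) (c m) \<in> W) F"
  proof eventually_elim
    case (elim m)
    have "(e m, c m) \<in> A \<times> C" using elim assms(3) by auto
    then have "(e m, c m) \<in> ?W" using A(3) by blast
    thus ?case by simp
  qed
qed

lemma scal_lim:
  fixes k N :: nat assumes "k \<le> N"
  shows "((\<lambda>m. of_nat m ^ k / of_nat m ^ N :: complex) \<longlongrightarrow> (if k = N then 1 else 0)) sequentially"
proof (cases "k = N")
  case True
  have "eventually (\<lambda>m. (of_nat m ^ k / of_nat m ^ N :: complex) = 1) sequentially"
    using eventually_gt_at_top[of 0] by eventually_elim (simp add: True)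
  then show ?thesis using True tendsto_eventually by (simp add: tendsto_eventually)
next
  case False
  have lim: "((\<lambda>m. (inverse (of_nat m :: complex) ^ (N - k))) \<longlongrightarrow> (0 ^ (N-k))) sequentially"
    by (intro tendsto_power lim_inverse_n)
  have "eventually (\<lambda>m. (inverse (of_nat m :: complex) ^ (N - k)) = (of_nat m ^ k / of_nat m ^ N :: complex)) sequentially"
    using eventually_gt_at_top[of 0]
  proof eventually_elim
    case (elim m)
    have "(of_nat m ^ N :: complex) = of_nat m ^ k * of_nat m ^ (N - k)"
      using assms by (simp add: power_add[symmetric])
    then show ?case using elim by (simp add: power_inverse divide_inverse)
  qed
  from tendsto_cong[OF this] lim False assms show ?thesis by (simp add: power_0_left)
qed

lemma poly_compact:
  fixes smul :: "complex \<Rightarrow> 'b::{topological_ab_group_add,t2_space} \<Rightarrow> 'b"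
  assumes tvs: "complex_tvs smul" and C: "compact C"
  shows "\<forall>a. (\<forall>m::nat. (\<Sum>k\<le>n. smul (of_nat m ^ k) (a k)) \<in> C) \<longrightarrow> (\<forall>k. 1 \<le> k \<and> k \<le> n \<longrightarrow> a k = 0)"
proof (induction n)
  case 0
  then show ?case by auto
next
  case (Suc n)
  interpret vector_space smul using tvs unfolding complex_tvs_def by auto
  show ?case
  proof (rule allI, rule impI)
    fix a assume H: "\<forall>m::nat. (\<Sum>k\<le>Suc n. smul (of_nat m ^ k) (a k)) \<in> C"
    define N where "N = Suc n"
    define q where "q m = (\<Sum>k\<le>N. smul (of_nat m ^ k) (a k))" for m :: nat
    have qC: "q m \<in> C" for m using H by (simp add: q_def N_def)
    have ev: "eventually (\<lambda>m. (\<Sum>k\<le>N. smul (of_nat m ^ k / of_nat m ^ N) (a k)) = smul (1 / of_nat m ^ N) (q m)) sequentially"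
      by (simp add: q_def scale_sum_right)
    have "((\<lambda>m. \<Sum>k\<le>N. smul (of_nat m ^ k / of_nat m ^ N) (a k)) \<longlongrightarrow> (\<Sum>k\<le>N. smul (if k = N then 1 else 0) (a k))) sequentially"
      by (intro tendsto_sum cont_smul[OF tvs] scal_lim tendsto_const) auto
    moreover have "(\<Sum>k\<le>N. smul (if k = N then 1 else 0) (a k)) = a N"
    proof -
      have "(\<Sum>k\<le>N. smul (if k = N then 1 else 0) (a k)) = (\<Sum>k\<le>N. if k = N then a k else 0)"
        by (intro sum.cong) auto
      then show ?thesis by simp
    qed
    ultimately have l1: "((\<lambda>m. smul (1 / of_nat m ^ N) (q m)) \<longlongrightarrow> a N) sequentially"
      using tendsto_cong[OF ev] by simp
    have "((\<lambda>m. of_nat m ^ 0 / of_nat m ^ N :: complex) \<longlongrightarrow> 0) sequentially"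
      using scal_lim[of 0 N] by (simp add: N_def)
    then have l2: "((\<lambda>m. smul (1 / of_nat m ^ N) (q m)) \<longlongrightarrow> 0) sequentially"
      by (intro compact_scale_0[OF tvs C qC]) simp
    have aN: "a N = 0" using LIMSEQ_unique[OF l1 l2] .
    have "\<forall>m::nat. (\<Sum>k\<le>n. smul (of_nat m ^ k) (a k)) \<in> C"
      using H aN by (simp add: N_def)
    with Suc.IH have "\<forall>k. 1 \<le> k \<and> k \<le> n \<longrightarrow> a k = 0" by blast
    with aN show "\<forall>k. 1 \<le> k \<and> k \<le> Suc n \<longrightarrow> a k = 0"
      by (metis N_def le_Suc_eq)
  qed
qed

lemma nmul_add: "nmul (a + b) (t::'a::comm_monoid_add) = nmul a t + nmul b t"
  by (induction a) (simp_all add: add.assoc)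

lemma nmul_mult0: "nmul N (t::'a::comm_monoid_add) = 0 \<Longrightarrow> nmul (q * N) t = 0"
  by (induction q) (simp_all add: nmul_add)

theorem lemma2p4:
  fixes smul :: "complex \<Rightarrow> 'x::{topological_ab_group_add,t2_space} \<Rightarrow> 'x"
  assumes "compact (UNIV :: 'k::topological_ab_group_add set) \<or> torsion_group TYPE('k)"
    and "complex_tvs smul"
  shows "(polys smul :: ('k \<Rightarrow> 'x) set) = polys_deg smul 0"
proof
  show "polys_deg smul 0 \<subseteq> polys smul" unfolding polys_def by blast
next
  interpret vector_space smul using assms(2) unfolding complex_tvs_def by auto
  show "polys smul \<subseteq> (polys_deg smul 0 :: ('k \<Rightarrow> 'x) set)"
  proof
    fix p :: "'k \<Rightarrow> 'x" assume "p \<in> polys smul"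
    then obtain n where pn: "p \<in> polys_deg smul n" unfolding polys_def by blast
    have cont: "continuous_on UNIV p" using pn unfolding polys_deg_def by blast
    have "\<exists>a::nat \<Rightarrow> 'x. \<forall>m::nat. p (s + nmul m t) = (\<Sum>k\<le>0. smul (of_nat m ^ k) (a k))" for s t
    proof -
      obtain a where a: "\<And>m::nat. p (s + nmul m t) = (\<Sum>k\<le>n. smul (of_nat m ^ k) (a k))"
        using pn unfolding polys_deg_def by blast
      obtain C where C: "compact C" "\<And>m. p (s + nmul m t) \<in> C"
      proof (cases "compact (UNIV :: 'k set)")
        case True
        show ?thesis
          by (rule that[of "p ` UNIV"]) (auto intro: compact_continuous_image[OF cont True])
      next
        case False
        then obtain N where N: "N > 0" "nmul N t = 0"
          using assms(1) unfolding torsion_group_def by blast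
        show ?thesis
        proof (rule that[of "(\<lambda>j. p (s + nmul j t)) ` {..<N}"])
          show "compact ((\<lambda>j. p (s + nmul j t)) ` {..<N})" by (intro finite_imp_compact) simp
          fix m
          have "m = (m div N) * N + m mod N" by simp
          then have "nmul m t = nmul (m mod N) t"
            by (metis nmul_add nmul_mult0[OF N(2)] add_0)
          moreover have "m mod N \<in> {..<N}" using N by simp
          ultimately show "p (s + nmul m t) \<in> (\<lambda>j. p (s + nmul j t)) ` {..<N}" by auto
        qed
      qed
      have z: "\<forall>k. 1 \<le> k \<and> k \<le> n \<longrightarrow> a k = 0"
        using poly_compact[OF assms(2) C(1), of n] C(2) a by metis
      have "(\<Sum>k\<le>n. smul (of_nat m ^ k) (a k)) = a 0" for m :: nat
      proof -
        have "(\<Sum>k\<le>n. smul (of_nat m ^ k) (a k)) = (\<Sum>k\<le>n. if k = 0 then a 0 else 0)"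
          using z by (intro sum.cong) auto
        then show ?thesis by simp
      qed
      then show ?thesis using a by (intro exI[of _ a]) simp
    qed
    then show "p \<in> polys_deg smul 0" using cont unfolding polys_deg_def by blast
  qed
qed

end
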